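(* Let $p\in\{3,4,\dots\}$, $a\ge0$, $b>0$ satisfy either ($a>0$ and $b\in[p/2-1,p/2]$) or ($a=0$ and $b\in[p/2-1,p/2)$). Let $n\in\mathbb{Z}^+=\{0,1,2,\dots\}$ and $k\in\{1,2,3\}$. (1) If $a=0$, then $\frac{w_k(n)}{w_{k-1}(n)}=n+\frac p2+k-b-1$. (2) If $a>0$, then $\frac{w_k(n)}{w_{k-1}(n)}=n+\frac p2+k-b-1+\phi(n+k-1)$, where $\phi:\mathbb{Z}^+\to(0,\infty)$ is given by $\phi(n)=\frac{\int_0^\infty\frac{ab}{a+z}g_0(z)(z/2)^{n+p/2-1}e^{-z/2}dz}{\int_0^\infty g_0(z)(z/2)^{n+p/2-1}e^{-z/2}dz}$; moreover $\phi$ is bounded and $\phi(n)=O(n^{-1})$ as $n\to\infty$.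
   Context: $g_0(z)=(a+z)^{-b}$ and, for $n\in\mathbb{Z}^+$ and $k\in\{0,1,2,3\}$, $w_k(n)=\int_0^\infty\frac{g_0(z)(z/2)^{n+p/2+k-1}e^{-z/2}}{2\Gamma(n+p/2)}dz$. *)

theory Defs
  imports "HOL-Analysis.Analysis" "HOL-Library.Landau_Symbols"
begin

definition g0 :: "real \<Rightarrow> real \<Rightarrow> real \<Rightarrow> real" where
  "g0 a b z = (a + z) powr (- b)"

definition w :: "real \<Rightarrow> real \<Rightarrow> nat \<Rightarrow> nat \<Rightarrow> nat \<Rightarrow> real" where
  "w a b p k n =
     (LINT z:{0<..}|lborel. g0 a b z * (z / 2) powr (real n + real p / 2 + real k - 1) * exp (- z / 2))
     / (2 * Gamma (real n + real p / 2))"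

definition phi :: "real \<Rightarrow> real \<Rightarrow> nat \<Rightarrow> nat \<Rightarrow> real" where
  "phi a b p n =
     (LINT z:{0<..}|lborel. a * b / (a + z) * g0 a b z * (z / 2) powr (real n + real p / 2 - 1) * exp (- z / 2))
     / (LINT z:{0<..}|lborel. g0 a b z * (z / 2) powr (real n + real p / 2 - 1) * exp (- z / 2))"

end

theory Submission imports Defs "HOL-Real_Asymp.Real_Asymp" begin

lemma L0:
  fixes c :: real assumes c: "c > -1"
  shows "set_integrable lborel {0<..} (\<lambda>z. (z/2) powr c * exp (-z/2))"
proof -
  have "((\<lambda>t. t powr (c+1-1) / exp t) has_integral Gamma (c+1)) {0..}"
    by (rule Gamma_integral_real) (use c in simp)
  hence "(\<lambda>t. t powr c / exp t) integrable_on {0..}" by auto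
  hence "(\<lambda>t. t powr c / exp t) absolutely_integrable_on {0..}"
    by (rule nonnegative_absolutely_integrable_1) auto
  hence "set_integrable lebesgue {0..} (\<lambda>t. t powr c / exp t)"
    by (simp add: absolutely_integrable_on_def)
  hence "integrable lebesgue (\<lambda>t. indicator {0..} t *\<^sub>R (t powr c / exp t))"
    by (simp add: set_integrable_def)
  hence "integrable lborel (\<lambda>t. indicator {0..} t *\<^sub>R (t powr c / exp t))"
    by (subst (asm) integrable_completion) (auto)
  hence "integrable lborel (\<lambda>t. indicator {0<..} t *\<^sub>R (t powr c / exp t))"
    by (rule Bochner_Integration.integrable_bound) (auto split: split_indicator)
  hence "integrable lborel (\<lambda>z. (\<lambda>t. indicator {0<..} t *\<^sub>R (t powr c / exp t)) (0 + (1/2) * z))"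
    by (subst lborel_integrable_real_affine_iff) auto
  thus ?thesis
    unfolding set_integrable_def
    by (rule back_subst[where P="integrable lborel"]) (auto simp: indicator_def exp_minus field_simps fun_eq_iff)
qed

lemma meas_f: "set_borel_measurable lborel {0<..} (\<lambda>z. g0 a b z * (z / 2) powr c * exp (- z / 2))"
  unfolding set_borel_measurable_def g0_def by measurable

lemma meas_j: "set_borel_measurable lborel {0<..} (\<lambda>z. a * b / (a + z) * g0 a b z * (z / 2) powr c * exp (- z / 2))"
  unfolding set_borel_measurable_def g0_def by measurable

lemma int_f:
  fixes a b c :: real
  assumes ha: "a \<ge> 0" and hb: "b > 0" and ok: "(a > 0 \<and> c > -1) \<or> (a = 0 \<and> c - b > -1)"
  shows "set_integrable lborel {0<..} (\<lambda>z. g0 a b z * (z / 2) powr c * exp (- z / 2))"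
proof (cases "a > 0")
  case True
  hence c: "c > -1" using ok by auto
  have "set_integrable lborel {0<..} (\<lambda>z. a powr (-b) * ((z/2) powr c * exp (-z/2)))"
    using L0[OF c] by (intro set_integrable_mult_right) auto
  thus ?thesis
  proof (rule set_integrable_bound[OF _ meas_f], intro AE_I2 impI)
    fix z :: real assume z: "z \<in> {0<..}"
    have "(a+z) powr (-b) \<le> a powr (-b)"
      by (rule powr_mono2') (use z True hb in auto)
    thus "norm (g0 a b z * (z / 2) powr c * exp (- z / 2)) \<le> norm (a powr (-b) * ((z/2) powr c * exp (-z/2)))"
      using z True unfolding g0_def by (auto simp: abs_mult intro!: mult_right_mono)
  qed
next
  case False
  hence a0: "a = 0" and c: "c - b > -1" using ok ha by auto
  have "set_integrable lborel {0<..} (\<lambda>z. 2 powr (-b) * ((z/2) powr (c-b) * exp (-z/2)))"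
    using L0[OF c] by (intro set_integrable_mult_right) auto
  thus ?thesis
  proof (rule set_integrable_bound[OF _ meas_f], intro AE_I2 impI)
    fix z :: real assume z: "z \<in> {0<..}"
    have "z powr (-b) * (z/2) powr c = 2 powr (-b) * (z/2) powr (c-b)"
    proof -
      have "z powr (-b) = (2 * (z/2)) powr (-b)" by simp
      also have "\<dots> = 2 powr (-b) * (z/2) powr (-b)" using z by (intro powr_mult; simp)
      finally have h1: "z powr (-b) = 2 powr (-b) * (z/2) powr (-b)" .
      have h2: "(z/2) powr (-b) * (z/2) powr c = (z/2) powr (c-b)"
        by (subst powr_add[symmetric]) simp
      show ?thesis by (simp only: h1 mult.assoc h2)
    qed
    thus "norm (g0 a b z * (z / 2) powr c * exp (- z / 2)) \<le> norm (2 powr (-b) * ((z/2) powr (c-b) * exp (-z/2)))"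
      using z a0 unfolding g0_def by (simp add: mult.assoc)
  qed
qed

lemma int_j:
  fixes a b c :: real
  assumes ha: "a \<ge> 0" and hb: "b > 0" and ok: "(a > 0 \<and> c > -1) \<or> (a = 0 \<and> c - b > -1)"
  shows "set_integrable lborel {0<..} (\<lambda>z. a * b / (a + z) * g0 a b z * (z / 2) powr c * exp (- z / 2))"
proof -
  have "set_integrable lborel {0<..} (\<lambda>z. b * (g0 a b z * (z / 2) powr c * exp (- z / 2)))"
    using int_f[OF assms] by (intro set_integrable_mult_right) auto
  thus ?thesis
  proof (rule set_integrable_bound[OF _ meas_j], intro AE_I2 impI)
    fix z :: real assume z: "z \<in> {0<..}"
    define X where "X = g0 a b z * (z / 2) powr c * exp (- z / 2)"
    define m where "m = a * b / (a + z)"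
    have "m \<le> b" unfolding m_def using z ha hb by (auto simp: field_simps intro!: mult_left_mono)
    moreover have m0: "0 \<le> m" unfolding m_def using z ha hb by auto
    moreover have X0: "0 \<le> X" unfolding g0_def X_def by auto
    ultimately have le: "m * X \<le> b * X" by (simp add: mult_right_mono)
    have eq: "a * b / (a + z) * g0 a b z * (z / 2) powr c * exp (- z / 2) = m * X"
      unfolding m_def X_def by (simp only: mult.assoc)
    have "norm (m * X) = m * X" using m0 X0 by simp
    moreover have "norm (b * X) = b * X" using hb X0 by simp
    ultimately show "norm (a * b / (a + z) * g0 a b z * (z / 2) powr c * exp (- z / 2))
        \<le> norm (b * (g0 a b z * (z / 2) powr c * exp (- z / 2)))"
      using le unfolding eq X_def[symmetric] by simp
  qed
qed

lemma set_int_pos: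
  fixes f :: "real \<Rightarrow> real"
  assumes i: "set_integrable lborel {0<..} f" and pos: "\<And>x. x > 0 \<Longrightarrow> f x > 0"
  shows "(LINT x:{0<..}|lborel. f x) > 0"
proof -
  let ?g = "\<lambda>x. indicator {0<..} x *\<^sub>R f x"
  have i': "integrable lborel ?g" using i by (simp add: set_integrable_def)
  have nn: "AE x in lborel. 0 \<le> ?g x" using pos by (auto simp: indicator_def less_imp_le)
  have "integral\<^sup>L lborel ?g \<ge> 0" by (rule integral_nonneg_AE[OF nn])
  moreover have "integral\<^sup>L lborel ?g \<noteq> 0"
  proof
    assume "integral\<^sup>L lborel ?g = 0"
    then have "AE x in lborel. ?g x = 0" using integral_nonneg_eq_0_iff_AE[OF i' nn] by simp
    then have "AE x in lborel. x \<notin> {1..2::real}"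
    proof eventually_elim
      fix x assume h: "?g x = 0"
      show "x \<notin> {1..2::real}"
      proof
        assume "x \<in> {1..2::real}"
        hence "x > 0" by auto
        hence "f x > 0" by (rule pos)
        with h \<open>x > 0\<close> show False by simp
      qed
    qed
    then have "{1..2::real} \<in> null_sets lborel" by (subst AE_iff_null_sets) auto
    thus False by (simp add: null_sets_def)
  qed
  ultimately show ?thesis by (simp add: set_lebesgue_integral_def)
qed


lemma deriv_F:
  fixes a b s z :: real
  assumes ha: "a \<ge> 0" and z: "z > 0"
  shows "((\<lambda>z. g0 a b z * (z/2) powr s * exp (-z/2)) has_real_derivative
     ((s-b)/2 * (g0 a b z * (z/2) powr (s-1) * exp (-z/2))
      + 1/2 * (a * b / (a + z) * g0 a b z * (z / 2) powr (s-1) * exp (- z / 2))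
      - 1/2 * (g0 a b z * (z/2) powr s * exp (-z/2)))) (at z)"
proof -
  have az: "a + z > 0" using ha z by simp
  have D: "((\<lambda>z. (a+z) powr (-b) * (z/2) powr s * exp(-z/2)) has_real_derivative
     (-b * (a+z) powr (-b-1) * (z/2) powr s * exp(-z/2) + (a+z) powr (-b) * (s * (z/2) powr (s-1) / 2) * exp(-z/2)
       - (a+z) powr (-b) * (z/2) powr s * exp(-z/2)/2)) (at z)"
    using az z by (auto intro!: derivative_eq_intros simp: field_simps)
  have e1: "(a+z) powr (-b-1) = (a+z) powr (-b) / (a+z)"
    using az by (simp add: powr_diff)
  have e2: "(z/2) powr s = (z/2) * (z/2) powr (s-1)"
    using z powr_add[of "z/2" 1 "s-1"] by simp
  show ?thesis
    unfolding g0_def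
  proof (rule DERIV_cong[OF D])
    show "-b * (a+z) powr (-b-1) * (z/2) powr s * exp(-z/2) + (a+z) powr (-b) * (s * (z/2) powr (s-1) / 2) * exp(-z/2)
       - (a+z) powr (-b) * (z/2) powr s * exp(-z/2)/2 =
     ((s-b)/2 * ((a+z) powr (-b) * (z/2) powr (s-1) * exp (-z/2))
      + 1/2 * (a * b / (a + z) * (a+z) powr (-b) * (z / 2) powr (s-1) * exp (- z / 2))
      - 1/2 * ((a+z) powr (-b) * (z/2) powr s * exp (-z/2)))"
      unfolding e1 e2 using az by (simp add: field_simps)
  qed
qed


lemma recur:
  fixes a b s :: real
  assumes ha: "a \<ge> 0" and hb: "b > 0"
    and ok: "(a > 0 \<and> s - 1 > -1) \<or> (a = 0 \<and> s - 1 - b > -1)"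
  shows "(LINT z:{0<..}|lborel. g0 a b z * (z/2) powr s * exp (-z/2))
       = (s - b) * (LINT z:{0<..}|lborel. g0 a b z * (z/2) powr (s-1) * exp (-z/2))
         + (LINT z:{0<..}|lborel. a * b / (a + z) * g0 a b z * (z / 2) powr (s-1) * exp (- z / 2))"
proof -
  define F where "F = (\<lambda>z. g0 a b z * (z/2) powr s * exp (-z/2))"
  define f0 where "f0 = (\<lambda>z. g0 a b z * (z/2) powr s * exp (-z/2))"
  define f1 where "f1 = (\<lambda>z. g0 a b z * (z/2) powr (s-1) * exp (-z/2))"
  define j1 where "j1 = (\<lambda>z. a * b / (a + z) * g0 a b z * (z / 2) powr (s-1) * exp (- z / 2))"
  define f where "f = (\<lambda>z. (s-b)/2 * f1 z + 1/2 * j1 z - 1/2 * f0 z)"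
  have okS: "(a > 0 \<and> s > -1) \<or> (a = 0 \<and> s - b > -1)" using ok by auto
  have i0: "set_integrable lborel {0<..} f0" unfolding f0_def by (rule int_f[OF ha hb okS])
  have i1: "set_integrable lborel {0<..} f1" unfolding f1_def by (rule int_f[OF ha hb ok])
  have ij: "set_integrable lborel {0<..} j1" unfolding j1_def by (rule int_j[OF ha hb ok])
  have ia: "set_integrable lborel {0<..} (\<lambda>z. (s-b)/2 * f1 z)" using i1 by auto
  have ib: "set_integrable lborel {0<..} (\<lambda>z. 1/2 * j1 z)" using ij by auto
  have ic: "set_integrable lborel {0<..} (\<lambda>z. 1/2 * f0 z)" using i0 by auto
  have iab: "set_integrable lborel {0<..} (\<lambda>z. (s-b)/2 * f1 z + 1/2 * j1 z)"
    using ia ib by (rule set_integral_add)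
  have i: "set_integrable lborel {0<..} f" unfolding f_def using iab ic by (rule set_integral_diff)
  have intf: "(LINT z:{0<..}|lborel. f z) = (s-b)/2 * (LINT z:{0<..}|lborel. f1 z)
      + 1/2 * (LINT z:{0<..}|lborel. j1 z) - 1/2 * (LINT z:{0<..}|lborel. f0 z)"
    unfolding f_def using set_integral_diff(2)[OF iab ic] set_integral_add(2)[OF ia ib] by simp
  have "(LBINT x=ereal 0..\<infinity>. f x) = 0 - 0"
  proof (rule interval_integral_FTC_integrable[where F=F])
    show "ereal 0 < \<infinity>" by simp
    fix x assume x: "ereal 0 < ereal x" "ereal x < \<infinity>"
    hence x0: "x > 0" by simp
    show "(F has_vector_derivative f x) (at x)"
      unfolding has_real_derivative_iff_has_vector_derivative[symmetric] F_def f_def f0_def f1_def j1_def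
      by (rule deriv_F[OF ha x0])
    show "isCont f x" unfolding f_def f0_def f1_def j1_def g0_def using x0 ha
      by (auto intro!: continuous_intros)
  next
    show "set_integrable lborel (einterval (ereal 0) \<infinity>) f" using i by simp
  next
    show "((F \<circ> real_of_ereal) \<longlongrightarrow> 0) (at_right (ereal 0))"
      unfolding ereal_tendsto_simps F_def g0_def
    proof (cases "a > 0")
      case True
      hence "s > 0" using ok by auto
      with True hb show "((\<lambda>z. (a + z) powr - b * (z / 2) powr s * exp (- z / 2)) \<longlongrightarrow> 0) (at_right 0)"
        by real_asymp
    next
      case False
      hence "a = 0" "s > b" using ok ha by auto
      with hb show "((\<lambda>z. (a + z) powr - b * (z / 2) powr s * exp (- z / 2)) \<longlongrightarrow> 0) (at_right 0)"
        by real_asymp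
    qed
  next
    show "((F \<circ> real_of_ereal) \<longlongrightarrow> 0) (at_left \<infinity>)"
      unfolding ereal_tendsto_simps F_def g0_def using ha hb by real_asymp
  qed
  hence "(LINT z:{0<..}|lborel. f z) = 0" by (simp add: interval_integral_to_infinity_eq)
  hence "(LINT z:{0<..}|lborel. f0 z) = (s-b) * (LINT z:{0<..}|lborel. f1 z) + (LINT z:{0<..}|lborel. j1 z)"
    unfolding intf by (simp add: field_simps)
  thus ?thesis unfolding f0_def f1_def j1_def .
qed


lemma g0_pos: "a \<ge> 0 \<Longrightarrow> z > 0 \<Longrightarrow> g0 a b z > 0"
  unfolding g0_def by simp

lemma I_pos:
  fixes a b c :: real
  assumes ha: "a \<ge> 0" and hb: "b > 0" and ok: "(a > 0 \<and> c > -1) \<or> (a = 0 \<and> c - b > -1)"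
  shows "(LINT z:{0<..}|lborel. g0 a b z * (z / 2) powr c * exp (- z / 2)) > 0"
  by (rule set_int_pos[OF int_f[OF ha hb ok]]) (use ha g0_pos in auto)

lemma J_pos:
  fixes a b c :: real
  assumes ha: "a > 0" and hb: "b > 0" and c: "c > -1"
  shows "(LINT z:{0<..}|lborel. a * b / (a + z) * g0 a b z * (z / 2) powr c * exp (- z / 2)) > 0"
  by (rule set_int_pos[OF int_j]) (use ha hb c g0_pos in auto)

lemma J_le_bI:
  fixes a b c :: real
  assumes ha: "a > 0" and hb: "b > 0" and c: "c > -1"
  shows "(LINT z:{0<..}|lborel. a * b / (a + z) * g0 a b z * (z / 2) powr c * exp (- z / 2))
    \<le> b * (LINT z:{0<..}|lborel. g0 a b z * (z / 2) powr c * exp (- z / 2))"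
proof -
  have ok: "(a > 0 \<and> c > -1) \<or> (a = 0 \<and> c - b > -1)" using ha c by auto
  have "(LINT z:{0<..}|lborel. a * b / (a + z) * g0 a b z * (z / 2) powr c * exp (- z / 2))
    \<le> (LINT z:{0<..}|lborel. b * (g0 a b z * (z / 2) powr c * exp (- z / 2)))"
  proof (rule set_integral_mono[OF int_j[OF _ hb ok]])
    show "set_integrable lborel {0<..} (\<lambda>z. b * (g0 a b z * (z / 2) powr c * exp (- z / 2)))"
      using int_f[OF _ hb ok] ha by auto
    fix z :: real assume z: "z \<in> {0<..}"
    define X where "X = g0 a b z * (z / 2) powr c * exp (- z / 2)"
    define m where "m = a * b / (a + z)"
    have "m \<le> b" unfolding m_def using z ha hb by (auto simp: field_simps intro!: mult_left_mono)
    moreover have X0: "0 \<le> X" unfolding g0_def X_def by auto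
    ultimately have le: "m * X \<le> b * X" by (simp add: mult_right_mono)
    have eq: "a * b / (a + z) * g0 a b z * (z / 2) powr c * exp (- z / 2) = m * X"
      unfolding m_def X_def by (simp only: mult.assoc)
    show "a * b / (a + z) * g0 a b z * (z / 2) powr c * exp (- z / 2) \<le> b * (g0 a b z * (z / 2) powr c * exp (- z / 2))"
      using le unfolding eq X_def[symmetric] .
  qed (use ha in auto)
  thus ?thesis by simp
qed

lemma J_le_I1:
  fixes a b c :: real
  assumes ha: "a > 0" and hb: "b > 0" and c: "c > 0"
  shows "(LINT z:{0<..}|lborel. a * b / (a + z) * g0 a b z * (z / 2) powr c * exp (- z / 2))
    \<le> (a * b / 2) * (LINT z:{0<..}|lborel. g0 a b z * (z / 2) powr (c-1) * exp (- z / 2))"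
proof -
  have ok: "(a > 0 \<and> c > -1) \<or> (a = 0 \<and> c - b > -1)" using ha c by auto
  have ok1: "(a > 0 \<and> c - 1 > -1) \<or> (a = 0 \<and> c - 1 - b > -1)" using ha c by auto
  have "(LINT z:{0<..}|lborel. a * b / (a + z) * g0 a b z * (z / 2) powr c * exp (- z / 2))
    \<le> (LINT z:{0<..}|lborel. (a * b / 2) * (g0 a b z * (z / 2) powr (c-1) * exp (- z / 2)))"
  proof (rule set_integral_mono[OF int_j[OF _ hb ok]])
    show "set_integrable lborel {0<..} (\<lambda>z. (a * b / 2) * (g0 a b z * (z / 2) powr (c-1) * exp (- z / 2)))"
      using int_f[OF _ hb ok1] ha by auto
    fix z :: real assume z: "z \<in> {0<..}"
    define X where "X = g0 a b z * (z / 2) powr (c-1) * exp (- z / 2)"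
    define m where "m = a * b / (a + z) * (z/2)"
    have "m \<le> a * b / 2" unfolding m_def using z ha hb by (auto simp: field_simps intro!: mult_left_mono)
    moreover have X0: "0 \<le> X" unfolding g0_def X_def by auto
    ultimately have le: "m * X \<le> (a * b / 2) * X" by (rule mult_right_mono)
    have e2: "(z/2) powr c = (z/2) * (z/2) powr (c-1)"
      using z powr_add[of "z/2" 1 "c-1"] by simp
    have eq: "a * b / (a + z) * g0 a b z * (z / 2) powr c * exp (- z / 2) = m * X"
      unfolding m_def X_def e2 by (simp only: mult.assoc mult.left_commute)
    show "a * b / (a + z) * g0 a b z * (z / 2) powr c * exp (- z / 2) \<le> (a * b / 2) * (g0 a b z * (z / 2) powr (c-1) * exp (- z / 2))"
      using le unfolding eq X_def[symmetric] .
  qed (use ha in auto)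
  thus ?thesis by simp
qed


lemma phi_facts:
  fixes a b :: real and p m :: nat
  assumes ha: "a > 0" and hb: "b > 0" and hbp: "b \<le> real p / 2" and hp: "p \<ge> 3"
  shows "phi a b p m > 0" "phi a b p m \<le> b" "m \<ge> 2 \<Longrightarrow> phi a b p m \<le> a * b / real m"
proof -
  define c where "c = real m + real p / 2 - 1"
  have c: "c > -1" "c > 0" using hp unfolding c_def by auto
  define I where "I = (LINT z:{0<..}|lborel. g0 a b z * (z / 2) powr c * exp (- z / 2))"
  define J where "J = (LINT z:{0<..}|lborel. a * b / (a + z) * g0 a b z * (z / 2) powr c * exp (- z / 2))"
  have ph: "phi a b p m = J / I" unfolding phi_def I_def J_def c_def ..
  have ok: "(a > 0 \<and> c > -1) \<or> (a = 0 \<and> c - b > -1)" using ha c by auto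
  have Ip: "I > 0" unfolding I_def using I_pos[OF _ hb ok] ha by simp
  have Jp: "J > 0" unfolding J_def using J_pos[OF ha hb c(1)] .
  show "phi a b p m > 0" unfolding ph using Ip Jp by simp
  have "J \<le> b * I" unfolding J_def I_def by (rule J_le_bI[OF ha hb c(1)])
  thus "phi a b p m \<le> b" unfolding ph using Ip by (simp add: divide_le_eq)
  assume m2: "m \<ge> 2"
  define I1 where "I1 = (LINT z:{0<..}|lborel. g0 a b z * (z / 2) powr (c-1) * exp (- z / 2))"
  define J1 where "J1 = (LINT z:{0<..}|lborel. a * b / (a + z) * g0 a b z * (z / 2) powr (c-1) * exp (- z / 2))"
  have ok1: "(a > 0 \<and> c - 1 > -1) \<or> (a = 0 \<and> c - 1 - b > -1)" using ha c by auto
  have rec: "I = (c - b) * I1 + J1" unfolding I_def I1_def J1_def by (rule recur[OF _ hb ok1]) (use ha in simp)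
  have I1p: "I1 > 0" unfolding I1_def using I_pos[OF _ hb] ok1 ha by simp
  have J1p: "J1 > 0" unfolding J1_def using J_pos[OF ha hb] c by simp
  have JI1: "J \<le> (a * b / 2) * I1" unfolding J_def I1_def by (rule J_le_I1[OF ha hb c(2)])
  have cb: "c - b \<ge> real m - 1" unfolding c_def using hbp by simp
  have m1: "real m - 1 > 0" using m2 by simp
  have "I \<ge> (real m - 1) * I1" unfolding rec using cb I1p J1p
    by (smt (verit) mult_right_mono)
  hence "J / I \<le> (a * b / 2) * I1 / ((real m - 1) * I1)"
    using JI1 Ip I1p m1 Jp by (intro frac_le) auto
  also have "\<dots> = (a * b / 2) / (real m - 1)" using I1p by simp
  also have "\<dots> \<le> a * b / real m"
    using m1 m2 ha hb by (simp add: field_simps)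
  finally show "phi a b p m \<le> a * b / real m" unfolding ph .
qed

theorem propositionA3:
  fixes a b :: real and p n k :: nat
  assumes hp: "p \<ge> 3"
    and ha: "a \<ge> 0" and hb: "b > 0"
    and hab: "(a > 0 \<and> real p / 2 - 1 \<le> b \<and> b \<le> real p / 2)
            \<or> (a = 0 \<and> real p / 2 - 1 \<le> b \<and> b < real p / 2)"
    and hk: "k \<in> {1, 2, 3}"
  shows "(a = 0 \<longrightarrow>
            w a b p k n / w a b p (k - 1) n = real n + real p / 2 + real k - b - 1)
       \<and> (a > 0 \<longrightarrow>
            w a b p k n / w a b p (k - 1) n
              = real n + real p / 2 + real k - b - 1 + phi a b p (n + k - 1)
          \<and> (\<forall>m. phi a b p m > 0)
          \<and> (\<exists>C. \<forall>m. \<bar>phi a b p m\<bar> \<le> C)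
          \<and> (\<lambda>m. phi a b p m) \<in> O(\<lambda>m. 1 / real m))"
proof -
  have k1: "k \<ge> 1" using hk by auto
  define s where "s = real n + real p / 2 + real k - 1"
  define G where "G = Gamma (real n + real p / 2)"
  have Gp: "G > 0" unfolding G_def using hp by (intro Gamma_real_pos) auto
  define I where "I = (\<lambda>c. LINT z:{0<..}|lborel. g0 a b z * (z / 2) powr c * exp (- z / 2))"
  define J where "J = (\<lambda>c. LINT z:{0<..}|lborel. a * b / (a + z) * g0 a b z * (z / 2) powr c * exp (- z / 2))"
  have wk: "w a b p k n = I s / (2 * G)" unfolding w_def I_def s_def G_def ..
  have wk1: "w a b p (k - 1) n = I (s - 1) / (2 * G)" unfolding w_def I_def s_def G_def
    using k1 by (simp add: of_nat_diff algebra_simps)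
  have ok1: "(a > 0 \<and> s - 1 > -1) \<or> (a = 0 \<and> s - 1 - b > -1)"
    using hab k1 hp unfolding s_def by auto
  have rec: "I s = (s - b) * I (s - 1) + J (s - 1)" unfolding I_def J_def
    by (rule recur[OF ha hb ok1])
  have Ip: "I (s - 1) > 0" unfolding I_def by (rule I_pos[OF ha hb ok1])
  have ratio: "w a b p k n / w a b p (k - 1) n = (s - b) + J (s - 1) / I (s - 1)"
    unfolding wk wk1 rec using Ip Gp by (simp add: field_simps)
  show ?thesis
  proof (intro conjI impI)
    assume a0: "a = 0"
    have "J (s - 1) = 0" unfolding J_def a0 by simp
    thus "w a b p k n / w a b p (k - 1) n = real n + real p / 2 + real k - b - 1"
      unfolding ratio s_def by simp
  next
    assume a0: "a > 0"
    have "phi a b p (n + k - 1) = J (s - 1) / I (s - 1)"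
      unfolding phi_def J_def I_def s_def using k1 by (simp add: of_nat_diff algebra_simps)
    thus "w a b p k n / w a b p (k - 1) n = real n + real p / 2 + real k - b - 1 + phi a b p (n + k - 1)"
      unfolding ratio s_def by simp
  next
    assume a0: "a > 0"
    have hbp: "b \<le> real p / 2" using hab by auto
    show "\<forall>m. phi a b p m > 0" using phi_facts(1)[OF a0 hb hbp hp] by blast
    show "\<exists>C. \<forall>m. \<bar>phi a b p m\<bar> \<le> C"
      using phi_facts(1,2)[OF a0 hb hbp hp] by (intro exI[of _ b]) (auto simp: less_imp_le)
    show "(\<lambda>m. phi a b p m) \<in> O(\<lambda>m. 1 / real m)"
    proof (rule bigoI[where c = "a * b"])
      show "\<forall>\<^sub>F m in at_top. norm (phi a b p m) \<le> a * b * norm (1 / real m)"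
      proof (rule eventually_mono[OF eventually_ge_at_top[of 2]])
        fix m :: nat assume m: "m \<ge> 2"
        have "norm (phi a b p m) = phi a b p m" using phi_facts(1)[OF a0 hb hbp hp, of m] by simp
        also have "\<dots> \<le> a * b / real m" by (rule phi_facts(3)[OF a0 hb hbp hp m])
        also have "\<dots> = a * b * norm (1 / real m)" by simp
        finally show "norm (phi a b p m) \<le> a * b * norm (1 / real m)" .
      qed
    qed
  qed
qed

end
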